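(* There exists a joint distribution $\mathbf{p}$ of random variables $(Y,\mathbf{B},A,Z^* )$, with $Y\in\{0,1\}$, $A\in\{0,1\}$, $\mathbf{B}$ taking values in $\mathcal{X}^b\subseteq\mathbb{R}^n$, and $Z^*=Z$ if $A=1$ and $Z^*=\texttt{N/A}$ if $A=0$ (where $Z$ is real-valued), such that the model $$f_{\text{csp}}(\mathbf{b},a,z^* )=\begin{cases}\mathbb{E}[Y\mid \mathbf{B}=\mathbf{b},A=1] & \text{if } a=0,\\ \mathbb{E}[Y\mid \mathbf{B}=\mathbf{b},A=1,Z^*=z^*] & \text{if } a=1\end{cases}$$ has strictly larger expected squared loss than the base model $f^*_{\text{base}}(\mathbf{b})=\mathbb{E}[Y\mid \mathbf{B}=\mathbf{b}]$, i.e. $$\mathbb{E}\big[(Y-f^*_{\text{base}}(\mathbf{B}))^2\big]<\mathbb{E}\big[(Y-f_{\text{csp}}(\mathbf{B},A,Z^* ))^2\big].$$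
   Context: Setting: each individual has base features $\mathbf{b}\in\mathcal{X}^b\subseteq\mathbb{R}^n$, an optional real-valued feature $z$, an availability indicator $a\in\{0,1\}$ (whether $z$ was disclosed), and observed imputed value $z^*=z$ if $a=1$ and $z^*=\texttt{N/A}$ if $a=0$; the label is $Y$. $f_{\text{csp}}$ is the model obtained by imposing conditional statistical parity $\mathbb{E}[\hat Y\mid \mathbf{B}=\mathbf{b},A=0]=\mathbb{E}[\hat Y\mid \mathbf{B}=\mathbf{b},A=1]$ together with predicting the conditional mean given all information when $a=1$. *)

theory Defs
  imports "HOL-Probability.Probability"
begin

text \<open>An outcome is a tuple (Y, B, A, Z*): label Y, base features B in R^n,
  availability indicator A, imputed value Z* (None encodes N/A).\<close>

type_synonym 'n outcome = "real \<times> (real ^ 'n) \<times> nat \<times> real option"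

definition oY :: "'n outcome \<Rightarrow> real" where "oY \<omega> = fst \<omega>"
definition oB :: "'n outcome \<Rightarrow> real ^ 'n" where "oB \<omega> = fst (snd \<omega>)"
definition oA :: "'n outcome \<Rightarrow> nat" where "oA \<omega> = fst (snd (snd \<omega>))"
definition oZ :: "'n outcome \<Rightarrow> real option" where "oZ \<omega> = snd (snd (snd \<omega>))"

definition cexp :: "'a pmf \<Rightarrow> ('a \<Rightarrow> real) \<Rightarrow> ('a \<Rightarrow> bool) \<Rightarrow> real" where
  "cexp p f P = measure_pmf.expectation p (\<lambda>\<omega>. if P \<omega> then f \<omega> else 0)
                / measure_pmf.prob p {\<omega>. P \<omega>}"

definition valid_joint :: "'n outcome pmf \<Rightarrow> bool" where
  "valid_joint p \<longleftrightarrow> (\<forall>\<omega>\<in>set_pmf p.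
      oY \<omega> \<in> {0, 1} \<and> oA \<omega> \<in> {0, 1} \<and> (oA \<omega> = 0 \<longleftrightarrow> oZ \<omega> = None))"

definition f_base :: "'n outcome pmf \<Rightarrow> real ^ 'n \<Rightarrow> real" where
  "f_base p b = cexp p oY (\<lambda>\<omega>. oB \<omega> = b)"

definition f_csp :: "'n outcome pmf \<Rightarrow> real ^ 'n \<Rightarrow> nat \<Rightarrow> real option \<Rightarrow> real" where
  "f_csp p b a z = (if a = 0 then cexp p oY (\<lambda>\<omega>. oB \<omega> = b \<and> oA \<omega> = 1)
                    else cexp p oY (\<lambda>\<omega>. oB \<omega> = b \<and> oA \<omega> = 1 \<and> oZ \<omega> = z))"

end

theory Submission
  imports Defs
begin

theorem lemma3p1:
  shows "\<exists>p :: 'n::finite outcome pmf.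
    valid_joint p \<and>
    (\<forall>\<omega>\<in>set_pmf p. measure_pmf.prob p {\<omega>'. oB \<omega>' = oB \<omega> \<and> oA \<omega>' = 1} > 0) \<and>
    measure_pmf.expectation p (\<lambda>\<omega>. (oY \<omega> - f_base p (oB \<omega>))\<^sup>2)
      < measure_pmf.expectation p (\<lambda>\<omega>. (oY \<omega> - f_csp p (oB \<omega>) (oA \<omega>) (oZ \<omega>))\<^sup>2)"
proof -
  define w1 :: "'n outcome" where "w1 = (1, 0, 0, None)"
  define w2 :: "'n outcome" where "w2 = (0, 0, 1, Some 0)"
  define S where "S = {w1, w2}"
  define p where "p = pmf_of_set S"
  have ne: "w1 \<noteq> w2" by (simp add: w1_def w2_def)
  have fin: "finite S" "S \<noteq> {}" by (auto simp: S_def)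
  have sp: "set_pmf p = S" using fin by (simp add: p_def)
  have E: "\<And>f::'n outcome \<Rightarrow> real. measure_pmf.expectation p f = (f w1 + f w2) / 2"
    using fin ne by (simp add: p_def integral_pmf_of_set S_def)
  have M: "\<And>A. measure_pmf.prob p A = real (card (S \<inter> A)) / (2::real)"
    using fin ne by (simp add: p_def measure_pmf_of_set S_def)
  have c1: "S \<inter> {\<omega>'. oB \<omega>' = 0 \<and> oA \<omega>' = 1} = {w2}"
    by (auto simp: S_def w1_def w2_def oB_def oA_def)
  have c2: "S \<inter> {\<omega>'. oB \<omega>' = 0} = S"
    by (auto simp: S_def w1_def w2_def oB_def)
  have c3: "S \<inter> {\<omega>'. oB \<omega>' = 0 \<and> oA \<omega>' = 1 \<and> oZ \<omega>' = Some 0} = {w2}"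
    by (auto simp: S_def w1_def w2_def oB_def oA_def oZ_def)
  have cS: "card S = 2" using ne by (simp add: S_def)
  have B: "oB w1 = 0" "oB w2 = 0" "oA w1 = 0" "oA w2 = 1" "oY w1 = 1" "oY w2 = 0"
    "oZ w2 = Some 0"
    by (simp_all add: w1_def w2_def oB_def oA_def oY_def oZ_def)
  have fb: "f_base p 0 = 1/2"
    unfolding f_base_def cexp_def E M using c2 cS B by simp
  have fc0: "f_csp p 0 0 z = 0" for z
    unfolding f_csp_def cexp_def E M using B by simp
  have fc1: "f_csp p 0 1 (Some 0) = 0"
    unfolding f_csp_def cexp_def E M using B by simp
  have v: "valid_joint p"
    unfolding valid_joint_def sp by (auto simp: S_def w1_def w2_def oY_def oA_def oZ_def)
  have pos: "\<forall>\<omega>\<in>set_pmf p. measure_pmf.prob p {\<omega>'. oB \<omega>' = oB \<omega> \<and> oA \<omega>' = 1} > 0"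
    unfolding sp M using c1 B by (auto simp: S_def)
  have lt: "measure_pmf.expectation p (\<lambda>\<omega>. (oY \<omega> - f_base p (oB \<omega>))\<^sup>2)
      < measure_pmf.expectation p (\<lambda>\<omega>. (oY \<omega> - f_csp p (oB \<omega>) (oA \<omega>) (oZ \<omega>))\<^sup>2)"
    unfolding E using B fc0 fc1 by (simp add: fb power2_eq_square del: One_nat_def)
  show ?thesis using v pos lt by blast
qed

end
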